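(* Let $s\ge0$, $p\in[1,+\infty)$, $\beta\in\mathbb R\setminus\{0\}$, $\varepsilon\in(0,1)$ and $f\in B^{s,\infty}_p(\mathbb R^d)$. Then $$E(\beta,f)\subset\left\{x\in\mathbb R^d:\ \liminf_{j\to+\infty}\ \sup_{l\in[(1-\varepsilon)j,(1+\varepsilon)j]\cap\mathbb N}\frac{\log|Q_lf(x)|}{j\log2}\ge\beta\right\}.$$
   Context: Standing setup. $(V_j)_{j\in\mathbb Z}$ is an orthogonal multiresolution analysis of $L^2(\mathbb R^d)$ with scaling function $\varphi$ (the integer translates of $\varphi$ form an orthonormal basis of $V_0$), and $\psi^{(1)},\dots,\psi^{(2^d-1)}$ are associated wavelets: the functions $2^{dj/2}\psi^{(i)}(2^j\cdot-k)$ form an orthonormal basis of $L^2(\mathbb R^d)$. The functions $\varphi,\psi^{(i)}$ are smooth, with fast decay: for every $N\ge0$ there is $C_N$ with $|\psi^{(i)}(x)|\le C_N(1+\|x\|)^{-N}$. For $j\ge0$, $k\in\mathbb Z^d$, the dyadic cube $\lambda=(j,k)$ is $\prod_{m=1}^d[k_m2^{-j},(k_m+1)2^{-j})$; $\Lambda_j$ is the set of such cubes; $\psi^{(i)}_\lambda(x)=\psi^{(i)}(2^jx-k)$. For $f$ set $C_k=\int\overline{\varphi(x-k)}f$, $c^{(i)}_\lambda=2^{dj}\int\overline{\psi^{(i)}_\lambda}f$, $Q_lf(x)=\sum_i\sum_{\lambda\in\Lambda_l}c^{(i)}_\lambda\psi^{(i)}_\lambda(x)$, $P_jf(x)=\sum_kC_k\varphi(x-k)+\sum_{0\le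 l<j}Q_lf(x)$, and when $(P_jf(x))_j$ converges $R_jf(x)=\sum_{l\ge j}Q_lf(x)$. $B^{s,\infty}_p(\mathbb R^d)$ is the set of $f$ with $(C_k)\in\ell^p$ and $\sup_{j}2^{(s-d/p)j}(\sum_i\sum_{\lambda\in\Lambda_j}|c^{(i)}_\lambda|^p)^{1/p}<\infty$. Level set (with $\log0=-\infty$): for $\beta>0$, $E(\beta,f)=\{x:\lim_j\frac{\log|P_jf(x)|}{j\log2}=\beta\}$; for $\beta<0$, $E(\beta,f)=\{x:(P_jf(x))_j\text{ converges and }\lim_j\frac{\log|R_jf(x)|}{j\log2}=\beta\}$. *)

theory Defs
  imports "HOL-Analysis.Analysis"
begin

section \<open>L^2(R^d) notions (functions R^d -> C, modulo a.e. equality)\<close>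

definition L2 :: "(real^'d \<Rightarrow> complex) set" where
  "L2 = {g. g \<in> borel_measurable lborel \<and> integrable lborel (\<lambda>x. (cmod (g x))^2)}"

definition ip :: "(real^'d \<Rightarrow> complex) \<Rightarrow> (real^'d \<Rightarrow> complex) \<Rightarrow> complex" where
  "ip g h = (LINT x|lborel. g x * cnj (h x))"

definition l2norm :: "(real^'d \<Rightarrow> complex) \<Rightarrow> real" where
  "l2norm g = sqrt (LINT x|lborel. (cmod (g x))^2)"

definition ae_zero :: "(real^'d \<Rightarrow> complex) \<Rightarrow> bool" where
  "ae_zero g \<longleftrightarrow> (AE x in lborel. g x = 0)"

definition closed_subspace :: "(real^'d \<Rightarrow> complex) set \<Rightarrow> bool" where
  "closed_subspace W \<longleftrightarrow> W \<subseteq> L2 \<and> (\<lambda>x. 0) \<in> W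
     \<and> (\<forall>g\<in>W. \<forall>h\<in>W. (\<lambda>x. g x + h x) \<in> W)
     \<and> (\<forall>g\<in>W. \<forall>c. (\<lambda>x. c * g x) \<in> W)
     \<and> (\<forall>g\<in>W. \<forall>h\<in>L2. (AE x in lborel. g x = h x) \<longrightarrow> h \<in> W)
     \<and> (\<forall>u g. (\<forall>n. u n \<in> W) \<longrightarrow> g \<in> L2 \<longrightarrow>
            (\<lambda>n. l2norm (\<lambda>x. u n x - g x)) \<longlonglongrightarrow> 0 \<longrightarrow> g \<in> W)"

definition onb_of :: "('i \<Rightarrow> (real^'d \<Rightarrow> complex)) \<Rightarrow> 'i set \<Rightarrow> (real^'d \<Rightarrow> complex) set \<Rightarrow> bool" where
  "onb_of e I W \<longleftrightarrow> (\<forall>i\<in>I. e i \<in> W)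
     \<and> (\<forall>i\<in>I. \<forall>j\<in>I. ip (e i) (e j) = (if i = j then 1 else 0))
     \<and> (\<forall>g\<in>W. (\<forall>i\<in>I. ip g (e i) = 0) \<longrightarrow> ae_zero g)"

definition ivec :: "int^'d \<Rightarrow> real^'d" where
  "ivec k = (\<chi> m. real_of_int (k $ m))"

coinductive smooth_fun :: "(real^'d \<Rightarrow> complex) \<Rightarrow> bool" where
  "(\<forall>x. f differentiable (at x)) \<Longrightarrow>
   (\<forall>m. smooth_fun (\<lambda>x. frechet_derivative f (at x) (axis m 1))) \<Longrightarrow> smooth_fun f"

definition fast_decay :: "(real^'d \<Rightarrow> complex) \<Rightarrow> bool" where
  "fast_decay g \<longleftrightarrow> (\<forall>N::real. N \<ge> 0 \<longrightarrow> (\<exists>C. \<forall>x. cmod (g x) \<le> C * (1 + norm x) powr (- N)))"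

abbreviation nwav :: "'d itself \<Rightarrow> nat" where
  "nwav _ \<equiv> 2 ^ CARD('d) - 1"

definition orth_MRA :: "(int \<Rightarrow> (real^'d \<Rightarrow> complex) set) \<Rightarrow> (real^'d \<Rightarrow> complex) \<Rightarrow> bool" where
  "orth_MRA V \<phi> \<longleftrightarrow> (\<forall>j. closed_subspace (V j))
     \<and> (\<forall>j. V j \<subseteq> V (j + 1))
     \<and> (\<forall>j g. g \<in> V j \<longleftrightarrow> (\<lambda>x. g (2 *\<^sub>R x)) \<in> V (j + 1))
     \<and> (\<forall>g. (\<forall>j. g \<in> V j) \<longrightarrow> ae_zero g)
     \<and> (\<forall>g\<in>L2. \<forall>e>0. \<exists>j. \<exists>h\<in>V j. l2norm (\<lambda>x. g x - h x) < e)
     \<and> onb_of (\<lambda>k x. \<phi> (x - ivec k)) (UNIV :: (int^'d) set) (V 0)"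

definition wavelet_setup ::
  "(int \<Rightarrow> (real^'d \<Rightarrow> complex) set) \<Rightarrow> (real^'d \<Rightarrow> complex) \<Rightarrow> (nat \<Rightarrow> real^'d \<Rightarrow> complex) \<Rightarrow> bool" where
  "wavelet_setup V \<phi> \<psi> \<longleftrightarrow> orth_MRA V \<phi>
     \<and> (\<forall>i\<in>{1..nwav TYPE('d)}. \<psi> i \<in> V 1 \<and> (\<forall>g\<in>V 0. ip (\<psi> i) g = 0))
     \<and> onb_of (\<lambda>(i, j, k) x. complex_of_real (2 powr (real CARD('d) * real_of_int j / 2))
                              * \<psi> i (2 powr (real_of_int j) *\<^sub>R x - ivec k))
              ({1..nwav TYPE('d)} \<times> (UNIV :: int set) \<times> (UNIV :: (int^'d) set)) L2
     \<and> smooth_fun \<phi> \<and> fast_decay \<phi>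
     \<and> (\<forall>i\<in>{1..nwav TYPE('d)}. smooth_fun (\<psi> i) \<and> fast_decay (\<psi> i))"

definition psil :: "(nat \<Rightarrow> real^'d \<Rightarrow> complex) \<Rightarrow> nat \<Rightarrow> nat \<Rightarrow> int^'d \<Rightarrow> real^'d \<Rightarrow> complex" where
  "psil \<psi> i j k x = \<psi> i ((2::real) ^ j *\<^sub>R x - ivec k)"

definition Ccoef :: "(real^'d \<Rightarrow> complex) \<Rightarrow> (real^'d \<Rightarrow> complex) \<Rightarrow> int^'d \<Rightarrow> complex" where
  "Ccoef \<phi> f k = (LINT x|lborel. cnj (\<phi> (x - ivec k)) * f x)"

definition ccoef :: "(nat \<Rightarrow> real^'d \<Rightarrow> complex) \<Rightarrow> (real^'d \<Rightarrow> complex) \<Rightarrow> nat \<Rightarrow> nat \<Rightarrow> int^'d \<Rightarrow> complex" where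
  "ccoef \<psi> f i j k = (2::complex) ^ (CARD('d) * j) * (LINT x|lborel. cnj (psil \<psi> i j k x) * f x)"

definition Qop :: "(nat \<Rightarrow> real^'d \<Rightarrow> complex) \<Rightarrow> (real^'d \<Rightarrow> complex) \<Rightarrow> nat \<Rightarrow> real^'d \<Rightarrow> complex" where
  "Qop \<psi> f l x = (\<Sum>\<^sub>\<infinity>(i, k) \<in> {1..nwav TYPE('d)} \<times> UNIV. ccoef \<psi> f i l k * psil \<psi> i l k x)"

definition Pop :: "(real^'d \<Rightarrow> complex) \<Rightarrow> (nat \<Rightarrow> real^'d \<Rightarrow> complex) \<Rightarrow> (real^'d \<Rightarrow> complex) \<Rightarrow> nat \<Rightarrow> real^'d \<Rightarrow> complex" where
  "Pop \<phi> \<psi> f j x = (\<Sum>\<^sub>\<infinity>k\<in>UNIV. Ccoef \<phi> f k * \<phi> (x - ivec k)) + (\<Sum>l<j. Qop \<psi> f l x)"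

text \<open>R_j f(x) = sum_{l >= j} Q_l f(x) (used only where (P_j f(x))_j converges).\<close>
definition Rop :: "(nat \<Rightarrow> real^'d \<Rightarrow> complex) \<Rightarrow> (real^'d \<Rightarrow> complex) \<Rightarrow> nat \<Rightarrow> real^'d \<Rightarrow> complex" where
  "Rop \<psi> f j x = (\<Sum>n. Qop \<psi> f (j + n) x)"

definition besov :: "real \<Rightarrow> real \<Rightarrow> (real^'d \<Rightarrow> complex) \<Rightarrow> (nat \<Rightarrow> real^'d \<Rightarrow> complex)
                      \<Rightarrow> (real^'d \<Rightarrow> complex) set" where
  "besov s p \<phi> \<psi> = {f. f \<in> borel_measurable lborel
     \<and> (\<forall>k. integrable lborel (\<lambda>x. cnj (\<phi> (x - ivec k)) * f x))
     \<and> (\<forall>i\<in>{1..nwav TYPE('d)}. \<forall>j k. integrable lborel (\<lambda>x. cnj (psil \<psi> i j k x) * f x))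
     \<and> (\<lambda>k. cmod (Ccoef \<phi> f k) powr p) summable_on (UNIV :: (int^'d) set)
     \<and> (\<forall>j. (\<lambda>(i, k). cmod (ccoef \<psi> f i j k) powr p) summable_on ({1..nwav TYPE('d)} \<times> UNIV))
     \<and> (\<exists>B. \<forall>j. 2 powr ((s - real CARD('d) / p) * real j)
           * (\<Sum>\<^sub>\<infinity>(i, k) \<in> {1..nwav TYPE('d)} \<times> UNIV. cmod (ccoef \<psi> f i j k) powr p) powr (1 / p) \<le> B)}"

definition lg :: "complex \<Rightarrow> ereal" where
  "lg z = (if z = 0 then -\<infinity> else ereal (ln (cmod z)))"

definition Eset :: "(real^'d \<Rightarrow> complex) \<Rightarrow> (nat \<Rightarrow> real^'d \<Rightarrow> complex) \<Rightarrow> real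
                     \<Rightarrow> (real^'d \<Rightarrow> complex) \<Rightarrow> (real^'d) set" where
  "Eset \<phi> \<psi> \<beta> f =
    (if \<beta> > 0 then {x. (\<lambda>j. lg (Pop \<phi> \<psi> f j x) / ereal (real j * ln 2)) \<longlonglongrightarrow> ereal \<beta>}
     else {x. convergent (\<lambda>j. Pop \<phi> \<psi> f j x)
              \<and> (\<lambda>j. lg (Rop \<psi> f j x) / ereal (real j * ln 2)) \<longlonglongrightarrow> ereal \<beta>})"

end

theory Submission imports Defs begin

lemma ev_lin: fixes d c::real assumes "d>0" shows "eventually (\<lambda>j::nat. c \<le> d * real j) sequentially"
proof -
  obtain n::nat where n: "c/d < real n" using reals_Archimedean2 by blast
  show ?thesis unfolding eventually_sequentially
  proof (intro exI allI impI)
    fix j assume "n \<le> j"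
    then have "c/d \<le> real j" using n by linarith
    then show "c \<le> d * real j" using assms by (simp add: field_simps)
  qed
qed

lemma ev_ln: fixes d::real assumes "d>0" shows "eventually (\<lambda>j::nat. ln (6*real j) \<le> d * real j) sequentially"
proof -
  have "eventually (\<lambda>x::real. ln x / x < d/2) at_top"
    using order_tendstoD(2)[OF ln_x_over_x_tendsto_0, of "d/2"] assms by simp
  moreover have "eventually (\<lambda>x::real. x > 0) at_top" by (rule eventually_gt_at_top)
  moreover have "eventually (\<lambda>x::real. ln 6 \<le> d/2 * x) at_top"
    unfolding eventually_at_top_linorder
  proof (intro exI allI impI)
    fix x::real assume "2 * ln 6 / d \<le> x"
    then have "2 * ln 6 \<le> x * d" using assms by (simp add: pos_divide_le_eq)
    then show "ln 6 \<le> d/2 * x" by (simp add: algebra_simps)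
  qed
  ultimately have "eventually (\<lambda>x::real. ln (6*x) \<le> d * x) at_top"
  proof eventually_elim
    case (elim x)
    then have "ln x \<le> d/2 * x" by (simp add: divide_less_eq)
    then show ?case using elim by (simp add: ln_mult)
  qed
  then show ?thesis by (rule eventually_compose_filterlim[OF _ filterlim_real_sequentially])
qed

lemma tele:
  fixes F Q :: "nat \<Rightarrow> complex"
  assumes step: "\<And>j. cmod (F (Suc j) - F j) = cmod (Q j)" and "a \<le> b"
  shows "cmod (F b - F a) \<le> (\<Sum>l\<in>{a..<b}. cmod (Q l))"
  using assms(2)
proof (induction b rule: dec_induct)
  case base then show ?case by simp
next
  case (step n)
  have "cmod (F (Suc n) - F a) \<le> cmod (F (Suc n) - F n) + cmod (F n - F a)"
    using norm_triangle_ineq[of "F (Suc n) - F n" "F n - F a"] by simp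
  also have "\<dots> \<le> cmod (Q n) + (\<Sum>l\<in>{a..<n}. cmod (Q l))" using step assms(1) by simp
  finally show ?case using step(1) by (simp add: sum.atLeastLessThan_Suc)
qed

lemma good_conv:
  fixes F :: "nat \<Rightarrow> complex" and \<beta> \<eta> :: real
  assumes lim: "(\<lambda>j. lg (F j) / ereal (real j * ln 2)) \<longlonglongrightarrow> ereal \<beta>" and "\<eta> > 0"
  shows "eventually (\<lambda>n. F n \<noteq> 0 \<and> (\<beta>-\<eta>)*(real n*ln 2) < ln (cmod (F n))
             \<and> ln (cmod (F n)) < (\<beta>+\<eta>)*(real n*ln 2)) sequentially"
proof -
  have e1: "eventually (\<lambda>n. ereal (\<beta>-\<eta>) < lg (F n) / ereal (real n * ln 2)) sequentially"
    using order_tendstoD(1)[OF lim] assms(2) by simp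
  have e2: "eventually (\<lambda>n. lg (F n) / ereal (real n * ln 2) < ereal (\<beta>+\<eta>)) sequentially"
    using order_tendstoD(2)[OF lim] assms(2) by simp
  have e3: "eventually (\<lambda>n::nat. 0 < n) sequentially" by (rule eventually_gt_at_top)
  from e1 e2 e3 show ?thesis
  proof eventually_elim
    case (elim n)
    have L: "real n * ln 2 > 0" using elim(3) by simp
    show ?case
    proof (cases "F n = 0")
      case True
      then show ?thesis using elim(1) L by (simp add: lg_def)
    next
      case False
      then have eq: "lg (F n) / ereal (real n * ln 2) = ereal (ln (cmod (F n)) / (real n * ln 2))"
      proof -
        have p0: "real n * ln 2 \<noteq> 0" using L by linarith
        show ?thesis by (simp only: lg_def if_False False ereal_divide p0 if_False simp_thms)
      qed
      have h1: "\<beta>-\<eta> < ln (cmod (F n)) / (real n * ln 2)" using elim(1) unfolding eq by simp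
      have h2: "ln (cmod (F n)) / (real n * ln 2) < \<beta>+\<eta>" using elim(2) unfolding eq by simp
      have k1: "(\<beta>-\<eta>)*(real n*ln 2) < ln(cmod(F n))" using h1 pos_less_divide_eq[OF L] by blast
      have k2: "ln(cmod(F n)) < (\<beta>+\<eta>)*(real n*ln 2)" using h2 pos_divide_less_eq[OF L] by blast
      show ?thesis using k1 k2 False by blast
    qed
  qed
qed

lemma two_exp: fixes u v :: real assumes "ln 2 + u < v" shows "2 * exp u < exp v"
proof -
  have "exp (ln 2 + u) = 2 * exp u" by (simp add: exp_add)
  moreover have "exp (ln 2 + u) < exp v" using assms by simp
  ultimately show ?thesis by simp
qed

lemma core:
  fixes F Q :: "nat \<Rightarrow> complex" and \<beta> \<epsilon> :: real
  assumes step: "\<And>j. cmod (F (Suc j) - F j) = cmod (Q j)"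
    and eps: "0 < \<epsilon>" "\<epsilon> < 1" and bne: "\<beta> \<noteq> 0"
    and lim: "(\<lambda>j. lg (F j) / ereal (real j * ln 2)) \<longlonglongrightarrow> ereal \<beta>"
  shows "eventually (\<lambda>j. \<exists>l. (1-\<epsilon>)*real j \<le> real l \<and> real l \<le> (1+\<epsilon>)*real j
            \<and> ereal \<beta> \<le> lg (Q l) / ereal (real j * ln 2)) sequentially"
proof -
  define \<gamma> where "\<gamma> = \<bar>\<beta>\<bar>"
  define \<eta> where "\<eta> = \<gamma>*\<epsilon>/4"
  define L where "L = (ln 2::real)"
  have L: "L > 0" unfolding L_def by simp
  have g: "\<gamma> > 0" using bne unfolding \<gamma>_def by simp
  have eta: "\<eta> > 0" unfolding \<eta>_def using g eps by simp
  obtain N where N: "\<And>n. n \<ge> N \<Longrightarrow> F n \<noteq> 0 \<and> (\<beta>-\<eta>)*(real n*L) < ln (cmod (F n))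
             \<and> ln (cmod (F n)) < (\<beta>+\<eta>)*(real n*L)"
    using good_conv[OF lim eta] unfolding eventually_sequentially L_def by blast
  have E1: "eventually (\<lambda>j. real N + 1 \<le> (1-\<epsilon>)*real j) sequentially"
    by (rule ev_lin) (use eps in simp)
  have E2: "eventually (\<lambda>j. 2 + 2*\<gamma> \<le> (\<gamma>*\<epsilon>)*real j) sequentially"
    by (rule ev_lin) (use eps g in simp)
  have E3: "eventually (\<lambda>j. ln (6*real j) \<le> (\<gamma>*\<epsilon>/4*L)*real j) sequentially"
    by (rule ev_ln) (use eps g L in simp)
  have E4: "eventually (\<lambda>j. (2*\<gamma>+1)*L \<le> (\<gamma>*\<epsilon>/4*L)*real j) sequentially"
    by (rule ev_lin) (use eps g L in simp)
  have E5: "eventually (\<lambda>j. 2 \<le> \<epsilon>*real j) sequentially"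
    by (rule ev_lin) (use eps in simp)
  have E6: "eventually (\<lambda>j. 1 \<le> 1*real j) sequentially"
    by (rule ev_lin) simp
  from E1 E2 E3 E4 E5 E6 show ?thesis
  proof eventually_elim
    case (elim j)
    define x where "x = real j"
    have x1: "x \<ge> 1" using elim(6) unfolding x_def by simp
    define a where "a = nat \<lceil>(1-\<epsilon>)*x\<rceil>"
    define b where "b = nat \<lfloor>(1+\<epsilon>)*x\<rfloor>"
    have y0: "0 \<le> (1-\<epsilon>)*x" using eps x1 by simp
    have ra: "real a = of_int \<lceil>(1-\<epsilon>)*x\<rceil>" unfolding a_def using y0 by simp
    have a1: "(1-\<epsilon>)*x \<le> real a" unfolding ra by simp
    have a2: "real a \<le> (1-\<epsilon>)*x + 1" unfolding ra using of_int_ceiling_le_add_one[of "(1-\<epsilon>)*x"] by simp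
    have z0: "0 \<le> (1+\<epsilon>)*x" using eps x1 by simp
    have rb: "real b = of_int \<lfloor>(1+\<epsilon>)*x\<rfloor>" unfolding b_def using z0 by simp
    have b1: "real b \<le> (1+\<epsilon>)*x" unfolding rb by simp
    have b2: "(1+\<epsilon>)*x - 1 \<le> real b" unfolding rb by linarith
    have aN: "a \<ge> N" using a1 elim(1) unfolding x_def by linarith
    have ab: "a < b" using a2 b2 elim(5) unfolding x_def by (simp add: algebra_simps)
    have bN: "b \<ge> N" using aN ab by simp
    show ?case
    proof (rule ccontr)
      assume H: "\<not> ?case"
      define T where "T = exp (\<beta>*(x*L))"
      have small: "cmod (Q l) \<le> T" if l: "l \<in> {a..<b}" for l
      proof -
        have w: "(1-\<epsilon>)*real j \<le> real l" "real l \<le> (1+\<epsilon>)*real j"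
          using l a1 b1 unfolding x_def by auto
        have nl: "\<not> ereal \<beta> \<le> lg (Q l) / ereal (real j * ln 2)" using H w by blast
        show ?thesis
        proof (cases "Q l = 0")
          case True then show ?thesis unfolding T_def by simp
        next
          case False
          have p0: "x * L \<noteq> 0" using x1 L by simp
          have eq: "lg (Q l) / ereal (real j * ln 2) = ereal (ln (cmod (Q l)) / (x*L))"
            unfolding x_def L_def using p0[unfolded x_def L_def]
            by (simp only: lg_def if_False False ereal_divide if_False simp_thms)
          have "ln (cmod (Q l)) / (x*L) < \<beta>" using nl unfolding eq by simp
          then have "ln (cmod (Q l)) < \<beta>*(x*L)" using pos_divide_less_eq[of "x*L"] x1 L by simp
          then have "exp (ln (cmod (Q l))) < T" unfolding T_def by simp
          then show ?thesis using False by simp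
        qed
      qed
      have "cmod (F b - F a) \<le> (\<Sum>l\<in>{a..<b}. cmod (Q l))" using tele[of F Q, OF step] ab by simp
      also have "\<dots> \<le> real (card {a..<b}) * T" using sum_bounded_above[of "{a..<b}", OF small] by simp
      also have "\<dots> = real (b - a) * T" by simp
      also have "\<dots> \<le> (6*x) * T"
      proof (rule mult_right_mono)
        have "\<epsilon>*x \<le> x" using eps x1 by simp
        moreover have "real (b - a) = real b - real a" using ab by simp
        moreover have "x - \<epsilon>*x \<le> real a" "real b \<le> x + \<epsilon>*x" using a1 b1 by (simp_all add: algebra_simps)
        ultimately show "real (b - a) \<le> 6*x" using x1 by linarith
        show "0 \<le> T" unfolding T_def by simp
      qed
      also have "\<dots> = exp (ln (6*x) + \<beta>*(x*L))" using x1 unfolding T_def by (simp add: exp_add)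
      finally have diff: "cmod (F b - F a) \<le> exp (ln (6*x) + \<beta>*(x*L))" .
      define A where "A = ln (cmod (F a))"
      define B where "B = ln (cmod (F b))"
      have FA: "cmod (F a) = exp A" unfolding A_def using N[OF aN] by simp
      have FB: "cmod (F b) = exp B" unfolding B_def using N[OF bN] by simp
      have Ab: "(\<beta>-\<eta>)*(real a*L) < A" "A < (\<beta>+\<eta>)*(real a*L)" unfolding A_def using N[OF aN] by auto
      have Bb: "(\<beta>-\<eta>)*(real b*L) < B" "B < (\<beta>+\<eta>)*(real b*L)" unfolding B_def using N[OF bN] by auto
      have lnb: "ln (6*x) + (2*\<gamma>+1)*L \<le> (\<gamma>*\<epsilon>/2*L)*x" using elim(3,4) unfolding x_def by simp
      have E2': "2 + 2*\<gamma> \<le> \<gamma>*\<epsilon>*x" using elim(2) unfolding x_def by simp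
      have ee: "\<gamma>*\<epsilon>*\<epsilon>*x \<le> \<gamma>*\<epsilon>*x" using g eps x1 by simp
      show False
      proof (cases "\<beta> > 0")
        case True
        have gb: "\<gamma> = \<beta>" unfolding \<gamma>_def using True by simp
        have be: "\<beta> - \<eta> > 0" unfolding \<eta>_def gb using True eps by (simp add: field_simps)
        have m1: "(\<beta>+\<eta>)*real a \<le> (\<beta>+\<eta>)*((1-\<epsilon>)*x+1)"
          by (rule mult_left_mono) (use a2 True eta in auto)
        have m2: "(\<beta>-\<eta>)*((1+\<epsilon>)*x-1) \<le> (\<beta>-\<eta>)*real b"
          by (rule mult_left_mono) (use b2 be in auto)
        have x1e: "(\<beta>+\<eta>)*((1-\<epsilon>)*x+1) = \<beta>*x - \<beta>*\<epsilon>*x + \<beta> + \<beta>*\<epsilon>*x/4 - \<beta>*\<epsilon>*\<epsilon>*x/4 + \<beta>*\<epsilon>/4"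
          unfolding \<eta>_def gb by (simp add: field_simps)
        have x2e: "(\<beta>-\<eta>)*((1+\<epsilon>)*x-1) = \<beta>*x + \<beta>*\<epsilon>*x - \<beta> - \<beta>*\<epsilon>*x/4 - \<beta>*\<epsilon>*\<epsilon>*x/4 + \<beta>*\<epsilon>/4"
          unfolding \<eta>_def gb by (simp add: field_simps)
        have E2'': "2 + 2*\<beta> \<le> \<beta>*\<epsilon>*x" using E2' unfolding gb .
        have ee': "\<beta>*\<epsilon>*\<epsilon>*x \<le> \<beta>*\<epsilon>*x" using ee unfolding gb .
        have bep: "0 \<le> \<beta>*\<epsilon>" using True eps by simp
        have p1: "1 + (\<beta>+\<eta>)*((1-\<epsilon>)*x+1) < (\<beta>-\<eta>)*((1+\<epsilon>)*x-1)"
          unfolding x1e x2e using E2'' True by linarith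
        have p2: "\<beta>*x + \<beta>*\<epsilon>*x/2 - \<beta> \<le> (\<beta>-\<eta>)*((1+\<epsilon>)*x-1)"
          unfolding x2e using ee' bep by linarith
        have q1: "1 + (\<beta>+\<eta>)*real a < (\<beta>-\<eta>)*real b" using m1 m2 p1 by linarith
        have q1': "L + (\<beta>+\<eta>)*(real a*L) < (\<beta>-\<eta>)*(real b*L)"
          using mult_strict_right_mono[OF q1 L] by (simp add: algebra_simps)
        have q2: "(\<beta>*x + \<beta>*\<epsilon>*x/2 - \<beta>)*L \<le> (\<beta>-\<eta>)*(real b*L)"
          using mult_right_mono[OF order.trans[OF p2 m2], of L] L by (simp add: algebra_simps)
        have r1: "L + A < B" using q1' Ab Bb by linarith
        have r2: "L + (ln (6*x) + \<beta>*(x*L)) < B"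
          using q2 Bb lnb mult_nonneg_nonneg[of L \<beta>] L True unfolding gb by (simp add: algebra_simps, linarith)
        have "exp B \<le> exp A + exp (ln (6*x) + \<beta>*(x*L))"
          using diff FA FB norm_triangle_ineq2[of "F b" "F a"] by simp
        moreover have "2 * exp A < exp B" by (rule two_exp) (use r1 L_def in simp)
        moreover have "2 * exp (ln (6*x) + \<beta>*(x*L)) < exp B" by (rule two_exp) (use r2 L_def in simp)
        ultimately show False by simp
      next
        case False
        then have bn: "\<beta> < 0" using bne by simp
        have gb: "\<gamma> = -\<beta>" unfolding \<gamma>_def using bn by simp
        have be: "\<beta> + \<eta> < 0" unfolding \<eta>_def gb using bn eps by (simp add: field_simps)
        have m1: "(\<beta>-\<eta>)*((1-\<epsilon>)*x+1) \<le> (\<beta>-\<eta>)*real a"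
          by (rule mult_left_mono_neg) (use a2 bn eta in auto)
        have m2: "(\<beta>+\<eta>)*real b \<le> (\<beta>+\<eta>)*((1+\<epsilon>)*x-1)"
          by (rule mult_left_mono_neg) (use b2 be in auto)
        have bg: "\<beta> = -\<gamma>" using gb by simp
        have y1e: "(\<beta>-\<eta>)*((1-\<epsilon>)*x+1) = -\<gamma>*x + \<gamma>*\<epsilon>*x - \<gamma> - \<gamma>*\<epsilon>*x/4 + \<gamma>*\<epsilon>*\<epsilon>*x/4 - \<gamma>*\<epsilon>/4"
          unfolding \<eta>_def bg by (simp add: field_simps)
        have y2e: "(\<beta>+\<eta>)*((1+\<epsilon>)*x-1) = -\<gamma>*x - \<gamma>*\<epsilon>*x + \<gamma> + \<gamma>*\<epsilon>*x/4 + \<gamma>*\<epsilon>*\<epsilon>*x/4 - \<gamma>*\<epsilon>/4"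
          unfolding \<eta>_def bg by (simp add: field_simps)
        have ge1: "\<gamma>*\<epsilon> \<le> \<gamma>" using g eps by simp
        have ge2: "0 \<le> \<gamma>*\<epsilon>*\<epsilon>*x" "0 \<le> \<gamma>*\<epsilon>*x" using g eps x1 by simp_all
        have p1: "1 + (\<beta>+\<eta>)*((1+\<epsilon>)*x-1) < (\<beta>-\<eta>)*((1-\<epsilon>)*x+1)"
          unfolding y1e y2e using E2' g by linarith
        have "\<beta>*x = -\<gamma>*x" using bg by simp
        have p2: "\<beta>*x + \<gamma>*\<epsilon>*x/2 - 2*\<gamma> \<le> (\<beta>-\<eta>)*((1-\<epsilon>)*x+1)"
          unfolding y1e using g ge1 ge2 bg \<open>\<beta>*x = -\<gamma>*x\<close> by linarith
        have q1: "1 + (\<beta>+\<eta>)*real b < (\<beta>-\<eta>)*real a" using m1 m2 p1 by linarith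
        have q1': "L + (\<beta>+\<eta>)*(real b*L) < (\<beta>-\<eta>)*(real a*L)"
          using mult_strict_right_mono[OF q1 L] by (simp add: algebra_simps)
        have q2: "(\<beta>*x + \<gamma>*\<epsilon>*x/2 - 2*\<gamma>)*L \<le> (\<beta>-\<eta>)*(real a*L)"
          using mult_right_mono[OF order.trans[OF p2 m1], of L] L by (simp add: algebra_simps)
        have r1: "L + B < A" using q1' Ab Bb by linarith
        have r2: "L + (ln (6*x) + \<beta>*(x*L)) < A"
        proof -
          have "(\<beta>*x + \<gamma>*\<epsilon>*x/2 - 2*\<gamma>)*L = \<beta>*(x*L) + \<gamma>*\<epsilon>/2*L*x - 2*\<gamma>*L"
            by (simp add: algebra_simps)
          moreover have "(2*\<gamma>+1)*L = 2*\<gamma>*L + L" by (simp add: algebra_simps)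
          ultimately show ?thesis using q2 Ab lnb by linarith
        qed
        have "exp A \<le> exp B + exp (ln (6*x) + \<beta>*(x*L))"
          using diff FA FB norm_triangle_ineq2[of "F a" "F b"] norm_minus_commute[of "F b" "F a"] by simp
        moreover have "2 * exp B < exp A" by (rule two_exp) (use r1 L_def in simp)
        moreover have "2 * exp (ln (6*x) + \<beta>*(x*L)) < exp A" by (rule two_exp) (use r2 L_def in simp)
        ultimately show False by simp
      qed
    qed
  qed
qed

theorem lemma3p4:
  fixes V :: "int \<Rightarrow> (real^'d \<Rightarrow> complex) set"
    and \<phi> :: "real^'d \<Rightarrow> complex"
    and \<psi> :: "nat \<Rightarrow> real^'d \<Rightarrow> complex"
    and f :: "real^'d \<Rightarrow> complex"
    and s p \<beta> \<epsilon> :: real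
  assumes "wavelet_setup V \<phi> \<psi>"
    and "s \<ge> 0" and "p \<ge> 1" and "\<beta> \<noteq> 0" and "0 < \<epsilon>" and "\<epsilon> < 1"
    and "f \<in> besov s p \<phi> \<psi>"
  shows "Eset \<phi> \<psi> \<beta> f \<subseteq>
    {x. Liminf sequentially
          (\<lambda>j::nat. SUP l \<in> {l::nat. (1 - \<epsilon>) * real j \<le> real l \<and> real l \<le> (1 + \<epsilon>) * real j}.
              lg (Qop \<psi> f l x) / ereal (real j * ln 2)) \<ge> ereal \<beta>}"
proof
  fix x assume xE: "x \<in> Eset \<phi> \<psi> \<beta> f"
  define Q where "Q l = Qop \<psi> f l x" for l
  have main: "eventually (\<lambda>j. \<exists>l. (1-\<epsilon>)*real j \<le> real l \<and> real l \<le> (1+\<epsilon>)*real j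
            \<and> ereal \<beta> \<le> lg (Q l) / ereal (real j * ln 2)) sequentially"
  proof (cases "\<beta> > 0")
    case True
    then have lim: "(\<lambda>j. lg (Pop \<phi> \<psi> f j x) / ereal (real j * ln 2)) \<longlonglongrightarrow> ereal \<beta>"
      using xE unfolding Eset_def by simp
    have st: "cmod (Pop \<phi> \<psi> f (Suc j) x - Pop \<phi> \<psi> f j x) = cmod (Q j)" for j
      unfolding Pop_def Q_def by simp
    show ?thesis by (rule core[OF st assms(5,6,4) lim])
  next
    case False
    then have conv: "convergent (\<lambda>j. Pop \<phi> \<psi> f j x)"
      and lim: "(\<lambda>j. lg (Rop \<psi> f j x) / ereal (real j * ln 2)) \<longlonglongrightarrow> ereal \<beta>"
      using xE unfolding Eset_def by auto
    have "convergent (\<lambda>j. \<Sum>l<j. Q l)"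
      using conv unfolding Pop_def Q_def by (simp add: convergent_add_const_iff)
    then have sQ: "summable Q" by (simp add: summable_iff_convergent)
    have st: "cmod (Rop \<psi> f (Suc j) x - Rop \<psi> f j x) = cmod (Q j)" for j
    proof -
      have sj: "summable (\<lambda>n. Q (j + n))"
        using summable_ignore_initial_segment[OF sQ, of j] by (simp add: add.commute)
      have "Rop \<psi> f (Suc j) x = (\<Sum>n. Q (j + Suc n))" unfolding Rop_def Q_def by simp
      also have "\<dots> = (\<Sum>n. Q (j + n)) - Q (j + 0)" using suminf_split_head[OF sj] by simp
      also have "(\<Sum>n. Q (j + n)) = Rop \<psi> f j x" unfolding Rop_def Q_def by simp
      finally show ?thesis by simp
    qed
    show ?thesis by (rule core[OF st assms(5,6,4) lim])
  qed
  have "eventually (\<lambda>j. ereal \<beta> \<le> (SUP l \<in> {l::nat. (1 - \<epsilon>) * real j \<le> real l \<and> real l \<le> (1 + \<epsilon>) * real j}.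
              lg (Qop \<psi> f l x) / ereal (real j * ln 2))) sequentially"
    using main
  proof eventually_elim
    case (elim j)
    then obtain l where l: "(1-\<epsilon>)*real j \<le> real l" "real l \<le> (1+\<epsilon>)*real j"
      "ereal \<beta> \<le> lg (Q l) / ereal (real j * ln 2)" by blast
    show ?case by (rule SUP_upper2[of l]) (use l in \<open>auto simp: Q_def\<close>)
  qed
  then show "x \<in> {x. Liminf sequentially
          (\<lambda>j::nat. SUP l \<in> {l::nat. (1 - \<epsilon>) * real j \<le> real l \<and> real l \<le> (1 + \<epsilon>) * real j}.
              lg (Qop \<psi> f l x) / ereal (real j * ln 2)) \<ge> ereal \<beta>}"
    by (simp add: Liminf_bounded)
qed

end
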